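(* Let $s$ be a positive integer and let $h_{s,i,j}$ be as in the context. Then for $0\le i\le s$, $$\sum_{j'=i+1}^{s}h_{s,i,j'}=(-1)^i\binom{s-1}{i}\Big[\frac1s\binom{2s}{s-1}-1\Big],$$ and for $s<i\le 2s$, $$\sum_{j'=0}^{i-s-1}h_{s,2s-i,s-j'}=(-1)^i\binom{s-1}{2s-i}\Big[\frac1s\binom{2s}{s-1}-1\Big].$$
   Context: For a fixed positive integer $s$, the numbers $h_{s,i,j}$ (integers $i\ge 0$, $j$) are defined recursively by: $h_{s,i,j}=0$ if $j\le i$; for $i=0$ and $j\ge 1$, $h_{s,0,j}=\binom{s+j-1}{j}\frac{s-j}{s}$; for $i>0$ and $j>i$, $h_{s,i,j}=-\frac{s-j+1}{i}h_{s,i-1,j-1}-\frac{j-i}{i}h_{s,i-1,j}$. Binomial coefficients $\binom{a}{b}$ with $0\le a<b$ are $0$. *)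

theory Defs
  imports Complex_Main
begin

text \<open>The numbers h_{s,i,j}. The index j is taken in nat: for j <= i the value is 0
  anyway, and the recursion only refers to indices j-1 >= i and j > i-1.\<close>
fun hcoef :: "nat \<Rightarrow> nat \<Rightarrow> nat \<Rightarrow> real" where
  "hcoef s 0 j =
     (if j = 0 then 0 else real ((s + j - 1) choose j) * (real s - real j) / real s)"
| "hcoef s (Suc i) j =
     (if j \<le> Suc i then 0
      else - ((real s - real j + 1) / real (Suc i)) * hcoef s i (j - 1)
           - ((real j - real (Suc i)) / real (Suc i)) * hcoef s i j)"

end

theory Submission
  imports Defs
begin

lemma h_zero: "j \<le> i \<Longrightarrow> hcoef s i j = 0"
  by (cases i) auto

declare hcoef.simps[simp del]

definition SS :: "nat \<Rightarrow> nat \<Rightarrow> real" where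
  "SS s i = (\<Sum>j\<le>s. hcoef s i j)"

lemma SS_alt: "i \<le> s \<Longrightarrow> SS s i = (\<Sum>j=i+1..s. hcoef s i j)"
proof -
  assume "i \<le> s"
  have "{..s} = {..i} \<union> {i+1..s}" using \<open>i \<le> s\<close> by auto
  then have "SS s i = (\<Sum>j\<in>{..i}. hcoef s i j) + (\<Sum>j=i+1..s. hcoef s i j)"
    unfolding SS_def by (subst sum.union_disjoint[symmetric]) auto
  also have "(\<Sum>j\<in>{..i}. hcoef s i j) = 0" by (auto intro: sum.neutral h_zero)
  finally show ?thesis by simp
qed

lemma SS_rec: "real (Suc i) * SS s (Suc i) = - (real s - real (Suc i)) * SS s i"
proof -
  have t: "real (Suc i) * hcoef s (Suc i) j =
      - (real s - real j + 1) * hcoef s i (j - 1) - (real j - real (Suc i)) * hcoef s i j" for j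
  proof (cases "j \<le> Suc i")
    case True
    have a: "hcoef s i (j - 1) = 0" using True by (intro h_zero) auto
    have b: "(real j - real (Suc i)) * hcoef s i j = 0"
      using True h_zero[of j i s] by (cases "j = Suc i") auto
    show ?thesis using True a b h_zero[of j "Suc i" s] by simp
  next
    case False
    have p: "real (Suc i) > 0" by simp
    have "hcoef s (Suc i) j = - ((real s - real j + 1) / real (Suc i)) * hcoef s i (j - 1)
           - ((real j - real (Suc i)) / real (Suc i)) * hcoef s i j"
      using False by (simp only: hcoef.simps if_False)
    moreover have "c * (- (a / c) * X - (b / c) * Y) = - a * X - b * Y" if "c > 0" for a b c X Y :: real
      using that by (simp add: field_simps)
    ultimately show ?thesis using p by presburger
  qed
  have "real (Suc i) * SS s (Suc i) = (\<Sum>j\<le>s. real (Suc i) * hcoef s (Suc i) j)"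
    unfolding SS_def by (simp add: sum_distrib_left)
  also have "\<dots> = - (\<Sum>j\<le>s. (real s - real j + 1) * hcoef s i (j - 1))
                 - (\<Sum>j\<le>s. (real j - real (Suc i)) * hcoef s i j)"
    by (simp only: t sum_subtractf mult_minus_left sum_negf)
  also have "(\<Sum>j\<le>s. (real s - real j + 1) * hcoef s i (j - 1))
       = (\<Sum>j\<le>s. (real s - real j) * hcoef s i j)"
  proof (cases s)
    case 0 then show ?thesis by (simp add: h_zero)
  next
    case (Suc r)
    have "(\<Sum>j\<le>s. (real s - real j + 1) * hcoef s i (j - 1))
        = (real s + 1) * hcoef s i 0 + (\<Sum>j<s. (real s - real (Suc j) + 1) * hcoef s i j)"
    proof -
      have "(\<Sum>j\<le>Suc r. (real s - real j + 1) * hcoef s i (j - 1))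
          = (real s + 1) * hcoef s i 0 + (\<Sum>j\<le>r. (real s - real (Suc j) + 1) * hcoef s i j)"
        by (subst sum.atMost_Suc_shift) simp
      moreover have "{..r} = {..<s}" using Suc by auto
      ultimately show ?thesis using Suc by simp
    qed
    also have "\<dots> = (\<Sum>j<s. (real s - real j) * hcoef s i j)"
      by (simp add: h_zero)
    also have "\<dots> = (\<Sum>j\<le>s. (real s - real j) * hcoef s i j)"
      by (simp add: lessThan_Suc_atMost[symmetric] Suc)
    finally show ?thesis .
  qed
  finally have E: "real (Suc i) * SS s (Suc i) =
      - (\<Sum>j\<le>s. (real s - real j) * hcoef s i j) - (\<Sum>j\<le>s. (real j - real (Suc i)) * hcoef s i j)" .
  have "(\<Sum>j\<le>s. (real s - real j) * hcoef s i j) + (\<Sum>j\<le>s. (real j - real (Suc i)) * hcoef s i j)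
     = (\<Sum>j\<le>s. ((real s - real j) + (real j - real (Suc i))) * hcoef s i j)"
    by (simp only: distrib_right sum.distrib)
  also have "\<dots> = (\<Sum>j\<le>s. (real s - real (Suc i)) * hcoef s i j)"
    by (rule sum.cong) simp_all
  also have "\<dots> = (real s - real (Suc i)) * SS s i"
    unfolding SS_def by (simp only: sum_distrib_left)
  finally show ?thesis using E by linarith
qed

lemma SS_closed: "0 < s \<Longrightarrow> i \<le> s \<Longrightarrow> SS s i = (-1) ^ i * real ((s - 1) choose i) * SS s 0"
proof (induction i)
  case 0 then show ?case by simp
next
  case (Suc i)
  then have IH: "SS s i = (-1) ^ i * real ((s - 1) choose i) * SS s 0" by simp
  have c: "real (Suc i) * real ((s - 1) choose Suc i) = real ((s-1) choose i) * (real s - real (Suc i))"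
  proof -
    have "Suc i * ((s - 1) choose Suc i) = ((s-1) choose i) * (s - 1 - i)"
      using binomial_absorption[of i "s - 1"] binomial_absorb_comp[of "s - 1" i]
      by (simp only: diff_diff_left mult.commute[of "(s - 1) choose i"] Suc_eq_plus1)
    then have "real (Suc i * ((s - 1) choose Suc i)) = real (((s-1) choose i) * (s - 1 - i))" by simp
    moreover have "real (s - 1 - i) = real s - real (Suc i)" using Suc.prems by (simp add: of_nat_diff)
    ultimately show ?thesis by (simp only: of_nat_mult)
  qed
  have "real (Suc i) * SS s (Suc i) = real (Suc i) * ((-1) ^ Suc i * real ((s - 1) choose Suc i) * SS s 0)"
  proof -
    have g: "c * X = c * (- p * B * Z)" if "c * X = - d * Y" "Y = p * A * Z" "c * B = A * d"
      for c X d Y p A B Z :: real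
    proof -
      have "c * X = - (p * Z) * (A * d)" using that(1,2) by (simp add: algebra_simps)
      also have "\<dots> = - (p * Z) * (c * B)" using that(3) by simp
      finally show ?thesis by (simp add: algebra_simps)
    qed
    show ?thesis using g[OF SS_rec[of i s] IH c] by simp
  qed
  moreover have nz: "real (Suc i) \<noteq> 0" by (simp del: of_nat_Suc)
  ultimately show ?case by (simp only: mult_left_cancel[OF nz])
qed

lemma term_id:
  assumes "0 < s" "1 \<le> j"
  shows "real ((s + j - 1) choose j) * (real s - real j) / real s
       = real ((s + j - 1) choose j) - real ((s + j - 1) choose (j - 1))"
proof -
  obtain k r where k: "j = Suc k" and r: "s = Suc r" using assms
    by (metis Suc_le_D One_nat_def gr0_implies_Suc)
  have "Suc k * (Suc (k + r) choose Suc k) = Suc r * (Suc (k + r) choose k)"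
    by (rule Suc_times_binomial_add)
  moreover have "s + j - 1 = Suc (k + r)" "j - 1 = k" using k r by simp_all
  ultimately have "j * ((s + j - 1) choose j) = s * ((s + j - 1) choose (j - 1))"
    using k r by metis
  then have "real (j * ((s + j - 1) choose j)) = real (s * ((s + j - 1) choose (j - 1)))" by (rule arg_cong)
  then have e: "real j * real ((s + j - 1) choose j) = real s * real ((s + j - 1) choose (j - 1))"
    by (simp only: of_nat_mult)
  have g: "A * (x - y) / x = A - B" if "x > 0" "y * A = x * B" for x y A B :: real
    using that by (simp add: field_simps)
  show ?thesis using assms(1) e by (intro g) simp_all
qed

lemma SS0: "0 < s \<Longrightarrow> SS s 0 = real ((2 * s) choose (s - 1)) / real s - 1"
proof -
  assume s: "0 < s"
  have "SS s 0 = (\<Sum>j=1..s. hcoef s 0 j)" using SS_alt[of 0 s] by simp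
  also have "\<dots> = (\<Sum>j=1..s. real ((s + j - 1) choose j) - real ((s + j - 1) choose (j - 1)))"
  proof (rule sum.cong[OF refl])
    fix j assume "j \<in> {1..s}"
    then have j: "1 \<le> j" "j \<noteq> 0" by auto
    have "hcoef s 0 j = real ((s + j - 1) choose j) * (real s - real j) / real s"
      using j by (simp add: hcoef.simps)
    then show "hcoef s 0 j = real ((s + j - 1) choose j) - real ((s + j - 1) choose (j - 1))"
      using term_id[OF s j(1)] by simp
  qed
  also have "\<dots> = (\<Sum>j=1..s. real ((s + j - 1) choose j)) - (\<Sum>j=1..s. real ((s + j - 1) choose (j - 1)))"
    by (simp add: sum_subtractf)
  also have "(\<Sum>j=1..s. real ((s + j - 1) choose j)) = real ((2*s) choose s) - 1"
  proof -
    have "(\<Sum>j\<le>s. ((s - 1) + j) choose j) = Suc (s - 1 + s) choose s" by (rule sum_choose_lower)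
    also have "Suc (s - 1 + s) = 2 * s" using s by simp
    finally have A: "(\<Sum>j\<le>s. ((s - 1) + j) choose j) = (2*s) choose s" .
    have "{..s} = insert 0 {1..s}" by auto
    then have "(\<Sum>j\<le>s. ((s - 1) + j) choose j) = 1 + (\<Sum>j=1..s. ((s - 1) + j) choose j)" by simp
    also have "(\<Sum>j=1..s. ((s - 1) + j) choose j) = (\<Sum>j=1..s. (s + j - 1) choose j)"
      using s by (intro sum.cong) auto
    finally have "(2*s) choose s = 1 + (\<Sum>j=1..s. (s + j - 1) choose j)" using A by simp
    then have "real ((2*s) choose s) = real (1 + (\<Sum>j=1..s. (s + j - 1) choose j))" by simp
    then have "real ((2*s) choose s) = 1 + (\<Sum>j=1..s. real ((s + j - 1) choose j))"
      by (simp only: of_nat_add of_nat_sum of_nat_1)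
    then show ?thesis by linarith
  qed
  also have "(\<Sum>j=1..s. real ((s + j - 1) choose (j - 1))) = real ((2*s) choose (s - 1))"
  proof -
    have "(\<Sum>j\<le>s-1. (s + j) choose j) = Suc (s + (s - 1)) choose (s - 1)" by (rule sum_choose_lower)
    also have "Suc (s + (s - 1)) = 2 * s" using s by simp
    finally have A: "(\<Sum>j\<le>s-1. (s + j) choose j) = (2*s) choose (s - 1)" .
    have "(\<Sum>j=1..s. (s + j - 1) choose (j - 1)) = (\<Sum>j\<in>Suc ` {..s-1}. (s + j - 1) choose (j - 1))"
    proof -
      have "Suc ` {..s-1} = {1..s}" using s by (simp add: image_Suc_atMost)
      then show ?thesis by simp
    qed
    also have "\<dots> = (\<Sum>j\<le>s-1. (s + j) choose j)" by (simp add: sum.reindex)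
    finally show ?thesis using A by (metis of_nat_sum)
  qed
  also have "real ((2*s) choose s) - 1 - real ((2*s) choose (s - 1)) = real ((2 * s) choose (s - 1)) / real s - 1"
  proof -
    obtain r where r: "s = Suc r" using s gr0_implies_Suc by blast
    have "Suc r * (Suc (r + Suc r) choose Suc r) = Suc (Suc r) * (Suc (r + Suc r) choose r)"
      by (rule Suc_times_binomial_add)
    moreover have "2 * s = Suc (r + Suc r)" "s - 1 = r" "s + 1 = Suc (Suc r)" using r by simp_all
    ultimately have "s * ((2*s) choose s) = (s + 1) * ((2*s) choose (s - 1))"
      using r by metis
    then have "real (s * ((2*s) choose s)) = real ((s + 1) * ((2*s) choose (s - 1)))" by (rule arg_cong)
    then have "real s * real ((2*s) choose s) = (real s + 1) * real ((2*s) choose (s - 1))"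
      by (simp only: of_nat_mult of_nat_add of_nat_1)
    moreover have "A - 1 - B = B / x - 1" if "x > 0" "x * A = (x + 1) * B" for x A B :: real
      using that by (simp add: field_simps)
    ultimately show ?thesis using s by (metis of_nat_0_less_iff)
  qed
  finally show ?thesis .
qed

theorem proposition11:
  fixes s :: nat
  assumes "s > 0"
  shows "(\<forall>i. i \<le> s \<longrightarrow>
            (\<Sum>j'=i+1..s. hcoef s i j') =
              (-1) ^ i * real ((s - 1) choose i) * (real ((2 * s) choose (s - 1)) / real s - 1))
       \<and> (\<forall>i. s < i \<and> i \<le> 2 * s \<longrightarrow>
            (\<Sum>j'=0..i-s-1. hcoef s (2 * s - i) (s - j')) =
              (-1) ^ i * real ((s - 1) choose (2 * s - i)) * (real ((2 * s) choose (s - 1)) / real s - 1))"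
proof -
  have P1: "(\<Sum>j'=i+1..s. hcoef s i j') =
              (-1) ^ i * real ((s - 1) choose i) * (real ((2 * s) choose (s - 1)) / real s - 1)"
    if "i \<le> s" for i
    using SS_alt[OF that] SS_closed[OF assms that] SS0[OF assms] by simp
  show ?thesis
  proof (intro conjI allI impI)
    fix i assume "i \<le> s" then show "(\<Sum>j'=i+1..s. hcoef s i j') =
              (-1) ^ i * real ((s - 1) choose i) * (real ((2 * s) choose (s - 1)) / real s - 1)"
      by (rule P1)
  next
    fix i assume i: "s < i \<and> i \<le> 2 * s"
    define k where "k = 2 * s - i"
    have ks: "k < s" "i = 2 * s - k" "i - s - 1 = s - (k + 1)" using i by (auto simp: k_def)
    have "(\<Sum>j'=0..i-s-1. hcoef s k (s - j')) = (\<Sum>j=k+1..s. hcoef s k j)"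
    proof -
      have "(\<Sum>j=k+1..s. hcoef s k j) = (\<Sum>j'\<in>(\<lambda>j. s - j) ` {k+1..s}. hcoef s k (s - j'))"
        by (subst sum.reindex) (auto simp: inj_on_def intro!: sum.cong)
      also have "(\<lambda>j. s - j) ` {k+1..s} = {0..i-s-1}"
      proof
        show "(\<lambda>j. s - j) ` {k+1..s} \<subseteq> {0..i-s-1}" using ks by auto
        show "{0..i-s-1} \<subseteq> (\<lambda>j. s - j) ` {k+1..s}"
        proof
          fix x assume "x \<in> {0..i-s-1}"
          then have "x = s - (s - x)" "s - x \<in> {k+1..s}" using ks by auto
          then show "x \<in> (\<lambda>j. s - j) ` {k+1..s}" by blast
        qed
      qed
      finally show ?thesis by simp
    qed
    also have "\<dots> = (-1) ^ k * real ((s - 1) choose k) * (real ((2 * s) choose (s - 1)) / real s - 1)"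
      using P1[OF less_imp_le[OF ks(1)]] .
    also have "(-1::real) ^ k = (-1) ^ i"
    proof -
      have "i = k + 2 * (s - k)" using ks by simp
      then show ?thesis by (simp add: power_add power_mult)
    qed
    finally show "(\<Sum>j'=0..i-s-1. hcoef s (2 * s - i) (s - j')) =
              (-1) ^ i * real ((s - 1) choose (2 * s - i)) * (real ((2 * s) choose (s - 1)) / real s - 1)"
      by (simp add: k_def)
  qed
qed

end
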